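(* Let $t\in(0,1/2)$ and $s\geq 1$. For $a,b>0$ define $$Q_{t,s}(a,b)=G^{s}\big(ta+(1-t)b,\ tb+(1-t)a\big)\,A^{1-s}(a,b).$$ Then the inequality $Q_{t,s}(a,b)>AG(a,b)$ holds for all $a,b>0$ with $a\neq b$ if and only if $t\geq \frac12-\frac{\sqrt{2s}}{4s}$.
   Context: For $a,b>0$: $G(a,b)=\sqrt{ab}$ is the geometric mean and $A(a,b)=(a+b)/2$ is the arithmetic mean. $AG(a,b)$ is the arithmetic-geometric mean: the common limit of the sequences defined by $a_0=a$, $b_0=b$, $a_{n+1}=(a_n+b_n)/2$, $b_{n+1}=\sqrt{a_nb_n}$. *)

theory Defs
  imports "HOL-Analysis.Analysis"
begin

definition GM :: "real \<Rightarrow> real \<Rightarrow> real" where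
  "GM a b = sqrt (a * b)"

definition AM :: "real \<Rightarrow> real \<Rightarrow> real" where
  "AM a b = (a + b) / 2"

fun agm_seq :: "real \<Rightarrow> real \<Rightarrow> nat \<Rightarrow> real \<times> real" where
  "agm_seq a b 0 = (a, b)"
| "agm_seq a b (Suc n) = (let (x, y) = agm_seq a b n in (AM x y, GM x y))"

definition AGM :: "real \<Rightarrow> real \<Rightarrow> real" where
  "AGM a b = lim (\<lambda>n. fst (agm_seq a b n))"

definition Q :: "real \<Rightarrow> real \<Rightarrow> real \<Rightarrow> real \<Rightarrow> real" where
  "Q t s a b = GM (t * a + (1 - t) * b) (t * b + (1 - t) * a) powr s * AM a b powr (1 - s)"

end

theory Submission
  imports Defs
begin

lemma agm_Suc: "agm_seq a b (Suc n) = (AM (fst (agm_seq a b n)) (snd (agm_seq a b n)), GM (fst (agm_seq a b n)) (snd (agm_seq a b n)))"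
  by (simp add: case_prod_beta Let_def)

declare agm_seq.simps(2)[simp del]

lemma agm_pos: assumes "0 < a" "0 < b"
  shows "0 < fst (agm_seq a b n) \<and> 0 < snd (agm_seq a b n)"
  using assms by (induction n) (auto simp: agm_Suc AM_def GM_def)

lemma agm_le: assumes "0 < a" "0 < b"
  shows "snd (agm_seq a b (Suc n)) \<le> fst (agm_seq a b (Suc n))"
  using agm_pos[OF assms, of n] arith_geo_mean_sqrt[of "fst (agm_seq a b n)" "snd (agm_seq a b n)"]
  by (simp add: agm_Suc AM_def GM_def)

lemma agm_dec: assumes "0 < a" "0 < b"
  shows "fst (agm_seq a b (Suc (Suc n))) \<le> fst (agm_seq a b (Suc n))"
  using agm_le[OF assms, of n] by (simp add: agm_Suc[of _ _ "Suc n"] AM_def)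

lemma agm_inc: assumes "0 < a" "0 < b"
  shows "snd (agm_seq a b (Suc n)) \<le> snd (agm_seq a b (Suc (Suc n)))"
proof -
  let ?x = "fst (agm_seq a b (Suc n))" and ?y = "snd (agm_seq a b (Suc n))"
  have "?y \<le> ?x" "0 < ?y" using agm_le[OF assms, of n] agm_pos[OF assms, of "Suc n"] by auto
  hence "sqrt (?y * ?y) \<le> sqrt (?x * ?y)" by (intro real_sqrt_le_mono mult_right_mono) auto
  thus ?thesis using \<open>0 < ?y\<close> by (simp add: agm_Suc[of _ _ "Suc n"] GM_def)
qed

lemma agm_bounds: assumes "0 < a" "0 < b"
  shows "snd (agm_seq a b 2) \<le> AGM a b \<and> AGM a b \<le> fst (agm_seq a b 2)"
proof -
  let ?X = "\<lambda>n. fst (agm_seq a b (Suc n))"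
  have dec: "decseq ?X" using agm_dec[OF assms] by (intro decseq_SucI) auto
  have inc: "incseq (\<lambda>n. snd (agm_seq a b (Suc n)))" using agm_inc[OF assms] by (intro incseq_SucI) auto
  obtain L where L: "?X \<longlonglongrightarrow> L" "\<forall>i. L \<le> ?X i"
    using decseq_convergent[OF dec, of 0] agm_pos[OF assms] by (metis less_imp_le)
  have "(\<lambda>n. fst (agm_seq a b n)) \<longlonglongrightarrow> L" using L(1) by (rule LIMSEQ_imp_Suc)
  hence AL: "AGM a b = L" unfolding AGM_def by (rule limI)
  have "\<forall>n\<ge>1. snd (agm_seq a b 2) \<le> ?X n"
  proof (intro allI impI)
    fix n :: nat assume "1 \<le> n"
    have "snd (agm_seq a b (Suc 1)) \<le> snd (agm_seq a b (Suc n))" using incseqD[OF inc \<open>1 \<le> n\<close>] by simp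
    also have "\<dots> \<le> ?X n" by (rule agm_le[OF assms])
    finally show "snd (agm_seq a b 2) \<le> ?X n" by (simp add: numeral_2_eq_2)
  qed
  hence "snd (agm_seq a b 2) \<le> L" by (intro LIMSEQ_le_const[OF L(1)]) blast
  moreover have "L \<le> fst (agm_seq a b 2)" using L(2)[rule_format, of 1] by (simp add: numeral_2_eq_2)
  ultimately show ?thesis using AL by simp
qed

lemma bern: fixes s x :: real assumes "1 \<le> s" "0 < x" shows "1 + s * (x - 1) \<le> x powr s"
proof -
  have "(x powr s) powr (1/s) * 1 powr (1 - 1/s) \<le> (1/s) * (x powr s) + (1 - 1/s) * 1"
    using assms by (intro Youngs_inequality_0) auto
  hence "x \<le> (x powr s)/s + 1 - 1/s" using assms by (simp add: powr_powr)
  hence "s * x \<le> s * ((x powr s)/s + 1 - 1/s)" using assms by simp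
  thus ?thesis using assms by (simp add: algebra_simps)
qed

lemma Q_eq:
  assumes "0 < a" "0 < b" "0 < t" "t < 1"
  shows "Q t s a b = AM a b * (((t * a + (1 - t) * b) * (t * b + (1 - t) * a)) / (AM a b)^2) powr (s/2)"
proof -
  let ?P = "(t * a + (1 - t) * b) * (t * b + (1 - t) * a)"
  have P: "0 < ?P" using assms by (intro mult_pos_pos add_pos_pos) auto
  have A: "0 < AM a b" using assms by (simp add: AM_def)
  have 1: "sqrt ?P powr s = ?P powr (s/2)" using P
    by (simp add: powr_half_sqrt[symmetric] powr_powr)
  have "(AM a b)^2 = AM a b powr 2" using A by simp
  hence "((AM a b)^2) powr (s/2) = AM a b powr s" by (simp add: powr_powr)
  hence 2: "(?P / (AM a b)^2) powr (s/2) = ?P powr (s/2) / AM a b powr s" using P A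
    by (simp add: powr_divide)
  have 3: "AM a b powr (1 - s) = AM a b / AM a b powr s" using A
    by (simp add: powr_diff)
  show ?thesis unfolding Q_def GM_def 1 2 3 by simp
qed


lemma P_ident: "(t * a + (1 - t) * b) * (t * b + (1 - t) * a) = (AM a b)^2 - (1 - 2 * t)^2 * ((a - b)/2)^2"
  unfolding AM_def by (simp add: power2_eq_square field_simps)

lemma agm2: "fst (agm_seq a b 2) = AM (AM a b) (GM a b)" "snd (agm_seq a b 2) = GM (AM a b) (GM a b)"
  by (simp_all add: numeral_2_eq_2 agm_Suc)

theorem theorem1p1:
  fixes t s :: real
  assumes "0 < t" and "t < 1/2" and "1 \<le> s"
  shows "(\<forall>a b. 0 < a \<longrightarrow> 0 < b \<longrightarrow> a \<noteq> b \<longrightarrow> Q t s a b > AGM a b)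
         \<longleftrightarrow> t \<ge> 1/2 - sqrt (2 * s) / (4 * s)"
proof -
  define r where "r = 1 - 2 * t"
  have r: "0 < r" "r < 1" using assms by (auto simp: r_def)
  have s0: "0 < s" using assms by simp
  have e1: "sqrt (2 * s) / (4 * s) = sqrt (1/(2 * s)) / 2"
  proof -
    have "sqrt (2 * s) * sqrt (2 * s) = 2 * s" using s0 by simp
    thus ?thesis using s0 by (simp add: real_sqrt_divide field_simps)
  qed
  have key: "t \<ge> 1/2 - sqrt (2 * s) / (4 * s) \<longleftrightarrow> r^2 \<le> 1/(2 * s)"
  proof
    assume "t \<ge> 1/2 - sqrt (2 * s) / (4 * s)"
    hence "r \<le> sqrt (1/(2 * s))" unfolding e1 r_def by simp
    hence "r^2 \<le> (sqrt (1/(2 * s)))^2" using r by (intro power_mono) auto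
    thus "r^2 \<le> 1/(2 * s)" using s0 by simp
  next
    assume "r^2 \<le> 1/(2 * s)"
    hence "r \<le> sqrt (1/(2 * s))" by (rule real_le_rsqrt)
    thus "t \<ge> 1/2 - sqrt (2 * s) / (4 * s)" unfolding e1 r_def by simp
  qed
  have tlt1: "t < 1" using assms by simp
  show ?thesis unfolding key
  proof
    assume H: "\<forall>a b. 0 < a \<longrightarrow> 0 < b \<longrightarrow> a \<noteq> b \<longrightarrow> Q t s a b > AGM a b"
    show "r^2 \<le> 1/(2 * s)"
    proof (rule ccontr)
      assume "\<not> r^2 \<le> 1/(2 * s)"
      define c where "c = r^2"
      define k where "k = 2 * s * c"
      have k1: "1 < k" using \<open>\<not> r^2 \<le> 1/(2 * s)\<close> s0 unfolding k_def c_def by (simp add: field_simps)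
      have c1: "0 < c" "c < 1" using r unfolding c_def by (auto simp: power_less_one_iff)
      define y where "y = (k - 1)/k"
      have y: "0 < y" "y < 1" using k1 unfolding y_def by auto
      define a where "a = 1 + sqrt y"
      define b where "b = 1 - sqrt y"
      have sy1: "0 < sqrt y" using y by simp
      have "sqrt y < sqrt 1" using y by (intro real_sqrt_less_mono) simp
      hence sy2: "sqrt y < 1" by simp
      have ab: "0 < a" "0 < b" "a \<noteq> b" using sy1 sy2 unfolding a_def b_def by linarith+
      have A1: "AM a b = 1" unfolding AM_def a_def b_def by simp
      have "a * b = 1 - (sqrt y)^2" unfolding a_def b_def by (simp add: algebra_simps power2_eq_square)
      hence abp: "a * b = 1 - y" using y by simp
      have P: "(t * a + (1 - t) * b) * (t * b + (1 - t) * a) = 1 - c*y"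
        unfolding P_ident A1 c_def r_def using y by (simp add: a_def b_def)
      have Qv: "Q t s a b = (1 - c*y) powr (s/2)"
        using Q_eq[OF ab(1,2) assms(1) tlt1, of s] unfolding P A1 by simp
      have "c*y < 1*1" using c1 y by (intro mult_strict_mono) auto
      hence cy: "0 < 1 - c*y" by simp
      define X where "X = (1 - c*y) powr (s/2)"
      have X0: "0 \<le> X" unfolding X_def by simp
      have X4: "X^4 = (1 - c*y) powr (2 * s)"
      proof -
        have "X^4 = X powr 4" using X0 by simp
        thus ?thesis unfolding X_def by (simp add: powr_powr)
      qed
      have "(1 - c*y) powr (2 * s) \<le> exp (-(c*y)) powr (2 * s)"
        using cy s0 exp_ge_add_one_self[of "-(c*y)"] by (intro powr_mono2) auto
      also have "\<dots> = exp (-(k - 1))"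
      proof -
        have "c * y * (2 * s) = k * y" unfolding k_def by simp
        also have "k * y = k - 1" using k1 unfolding y_def by simp
        finally have "-(c*y) * (2 * s) = -(k - 1)" by simp
        thus ?thesis unfolding exp_powr_real by simp
      qed
      also have "\<dots> \<le> 1/k"
      proof -
        have "k \<le> exp (k - 1)" using exp_ge_add_one_self[of "k-1"] by simp
        have "exp (-(k-1)) = inverse (exp (k-1))" by (rule exp_minus)
        also have "\<dots> \<le> inverse k" using k1 \<open>k \<le> exp (k - 1)\<close> by (intro le_imp_inverse_le) auto
        finally show ?thesis by (simp add: inverse_eq_divide)
      qed
      also have "1/k = 1 - y" using k1 unfolding y_def by (simp add: field_simps)
      finally have "(X^2)^2 \<le> 1 - y" using X4 by simp
      hence "X^2 \<le> sqrt (1 - y)" by (rule real_le_rsqrt)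
      hence "X \<le> sqrt (sqrt (1 - y))" by (rule real_le_rsqrt)
      also have "\<dots> = snd (agm_seq a b 2)" unfolding agm2 GM_def A1 abp by simp
      also have "\<dots> \<le> AGM a b" using agm_bounds[OF ab(1,2)] by simp
      finally have "Q t s a b \<le> AGM a b" unfolding Qv X_def .
      thus False using H ab by force
    qed
  next
    assume rs: "r^2 \<le> 1/(2 * s)"
    show "\<forall>a b. 0 < a \<longrightarrow> 0 < b \<longrightarrow> a \<noteq> b \<longrightarrow> Q t s a b > AGM a b"
    proof (intro allI impI)
      fix a b :: real assume a: "0 < a" and b: "0 < b" and ab: "a \<noteq> b"
      define A where "A = AM a b"
      define g where "g = sqrt (a*b)"
      have A0: "0 < A" using a b by (simp add: A_def AM_def)
      have g0: "0 < g" using a b by (simp add: g_def)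
      have g2: "g^2 = a*b" using a b by (simp add: g_def)
      have d: "A^2 - g^2 = ((a - b)/2)^2" unfolding A_def AM_def g2 by (simp add: power2_eq_square field_simps)
      have dpos: "0 < ((a - b)/2)^2" using ab by simp
      have "g^2 < A^2" using d dpos by linarith
      hence gA: "g < A" using A0 g0 by (simp add: power_less_imp_less_base)
      define w where "w = g / A"
      have w: "0 < w" "w < 1" using gA g0 A0 by (auto simp: w_def)
      define u where "u = ((t * a + (1 - t) * b) * (t * b + (1 - t) * a)) / A^2"
      have u: "u = 1 - r^2 * (1 - w^2)"
        unfolding u_def P_ident A_def[symmetric] r_def[symmetric] d[symmetric] w_def using A0
        by (simp add: field_simps power2_eq_square)
      define v where "v = 1 - (1 - w^2)/(2 * s)"
      have w2: "0 < 1 - w^2" "1 - w^2 < 1" using w by (auto simp: power_less_one_iff)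
      have "r^2 * (1 - w^2) \<le> 1/(2 * s) * (1 - w^2)" using rs w2 by (intro mult_right_mono) auto
      hence vu: "v \<le> u" unfolding u v_def by simp
      have "1 - w^2 < 2 * s" using w2 assms(3) by linarith
      hence "(1 - w^2)/(2 * s) < 1" using s0 by (simp add: field_simps)
      hence v0: "0 < v" unfolding v_def by simp
      have "(1 + w^2)/2 = 1 + s * (v - 1)" unfolding v_def using s0 by (simp add: field_simps)
      also have "\<dots> \<le> v powr s" using bern[OF assms(3) v0] .
      also have "\<dots> \<le> u powr s" using vu v0 s0 by (intro powr_mono2) auto
      finally have "sqrt ((1 + w^2)/2) \<le> sqrt (u powr s)" by (rule real_sqrt_le_mono)
      also have "sqrt (u powr s) = u powr (s/2)" using vu v0 by (simp add: powr_half_sqrt_powr)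
      finally have us: "sqrt ((1 + w^2)/2) \<le> u powr (s/2)" .
      have "((1 + w)/2)^2 < (1 + w^2)/2"
      proof -
        have "0 < (1 - w)^2" using w by simp
        thus ?thesis by (simp add: power2_eq_square field_simps)
      qed
      hence "(1 + w)/2 < sqrt ((1 + w^2)/2)" by (rule real_less_rsqrt)
      hence "(1 + w)/2 < u powr (s/2)" using us by simp
      hence "A * ((1 + w)/2) < A * u powr (s/2)" using A0 by simp
      moreover have "A * ((1 + w)/2) = fst (agm_seq a b 2)"
        unfolding agm2 AM_def[of A] A_def[symmetric] GM_def g_def[symmetric] w_def using A0 by (simp add: field_simps)
      moreover have "Q t s a b = A * u powr (s/2)"
        unfolding Q_eq[OF a b assms(1) tlt1] A_def u_def ..
      ultimately show "Q t s a b > AGM a b" using agm_bounds[OF a b] by simp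
    qed
  qed
qed

end
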